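(* Let $\Gamma=(\mathcal{G},\mathcal{I},\boldsymbol{c})$ be a nonatomic routing game with BPR-type cost functions (i.e., there is $\beta\in\mathbb{R}_+$ such that $c_e(x)=t_e+a_ex^{\beta}$ with $t_e,a_e\in\mathbb{R}_+$ for every edge $e$) and a single origin-destination pair. Then there exists a demand-independent optimal toll (DIOT) $\boldsymbol{\tau}$ for $\Gamma$ that satisfies the budget constraint $\sum_{e\in\mathcal{E}}\tau_ex_e\ge0$ for every feasible flow $\boldsymbol{f}$ (for any demand), where $x_e$ is the load induced by $\boldsymbol{f}$.
   Context: A nonatomic routing game $\Gamma=(\mathcal{G},\mathcal{I},\boldsymbol{c})$ consists of a finite directed multigraph $\mathcal{G}=(\mathcal{V},\mathcal{E})$, a finite set $\mathcal{I}$ of origin-destination pairs $i$ with origin $o^i$ and destination $d^i$, and nondecreasing continuous cost functions $c_e:\mathbb{R}_+\to\mathbb{R}_+$. $\mathcal{P}^i$ is the set of simple $o^i$–$d^i$ paths. For a demand vector $\boldsymbol{\mu}\in\mathbb{R}_+^{\mathcal{I}}$, feasible flows are $\boldsymbol{f}\in\mathbb{R}_+^{\mathcal{P}}$ with $\sum_{p\in\mathcal{P}^i}f_p=\mu^i$; loads $x_e=\sum_{p\ni e}f_p$; path costs $c_p=\sum_{e\in p}c_e(x_e)$. A Wardrop equilibrium is a feasible flow where every used path of each pair $i$ has cost at most that of any other path in $\mathcal{P}^i$. The total cost is $L(\boldsymbol{f})=\sum_p f_pc_p(\boldsymbol{f})$; a system optimum minimizes $L$ over feasible flows. For a toll vector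 $\boldsymbol{\tau}\in\mathbb{R}^{\mathcal{E}}$ (entries may be negative), $\Gamma^{\boldsymbol{\tau}}$ has edge costs $c_e(x)+\tau_e$. $\boldsymbol{\tau}$ is a DIOT for $\Gamma$ if for every demand vector $\boldsymbol{\mu}\in\mathbb{R}_+^{\mathcal{I}}$ every Wardrop equilibrium of $\Gamma^{\boldsymbol{\tau}}$ with demand $\boldsymbol{\mu}$ is a system optimum of $\Gamma$ for demand $\boldsymbol{\mu}$. *)

theory Defs
  imports Complex_Main
begin

text \<open>A directed multigraph is given by a finite edge set E with source/target maps
  src, tgt :: 'e \<Rightarrow> 'v. A path is a list of edges.\<close>

fun is_walk :: "('e \<Rightarrow> 'v) \<Rightarrow> ('e \<Rightarrow> 'v) \<Rightarrow> 'v \<Rightarrow> 'e list \<Rightarrow> 'v \<Rightarrow> bool" where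
  "is_walk src tgt u [] v = (u = v)"
| "is_walk src tgt u (e # p) v = (src e = u \<and> is_walk src tgt (tgt e) p v)"

definition od_paths :: "'e set \<Rightarrow> ('e \<Rightarrow> 'v) \<Rightarrow> ('e \<Rightarrow> 'v) \<Rightarrow> 'v \<Rightarrow> 'v \<Rightarrow> 'e list set" where
  "od_paths E src tgt orig dest = {p. set p \<subseteq> E \<and> is_walk src tgt orig p dest \<and> distinct (orig # map tgt p)}"

definition load :: "'e list set \<Rightarrow> ('e list \<Rightarrow> real) \<Rightarrow> 'e \<Rightarrow> real" where
  "load P f e = (\<Sum>p\<in>P. if e \<in> set p then f p else 0)"

definition path_cost :: "'e list set \<Rightarrow> ('e \<Rightarrow> real \<Rightarrow> real) \<Rightarrow> ('e list \<Rightarrow> real) \<Rightarrow> 'e list \<Rightarrow> real" where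
  "path_cost P c f p = (\<Sum>e\<leftarrow>p. c e (load P f e))"

definition feasible :: "'e list set \<Rightarrow> real \<Rightarrow> ('e list \<Rightarrow> real) \<Rightarrow> bool" where
  "feasible P \<mu> f \<longleftrightarrow> (\<forall>p\<in>P. f p \<ge> 0) \<and> (\<Sum>p\<in>P. f p) = \<mu>"

definition total_cost :: "'e list set \<Rightarrow> ('e \<Rightarrow> real \<Rightarrow> real) \<Rightarrow> ('e list \<Rightarrow> real) \<Rightarrow> real" where
  "total_cost P c f = (\<Sum>p\<in>P. f p * path_cost P c f p)"

definition wardrop :: "'e list set \<Rightarrow> ('e \<Rightarrow> real \<Rightarrow> real) \<Rightarrow> real \<Rightarrow> ('e list \<Rightarrow> real) \<Rightarrow> bool" where
  "wardrop P c \<mu> f \<longleftrightarrow> feasible P \<mu> f \<and>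
     (\<forall>p\<in>P. f p > 0 \<longrightarrow> (\<forall>q\<in>P. path_cost P c f p \<le> path_cost P c f q))"

definition system_optimum :: "'e list set \<Rightarrow> ('e \<Rightarrow> real \<Rightarrow> real) \<Rightarrow> real \<Rightarrow> ('e list \<Rightarrow> real) \<Rightarrow> bool" where
  "system_optimum P c \<mu> f \<longleftrightarrow> feasible P \<mu> f \<and>
     (\<forall>g. feasible P \<mu> g \<longrightarrow> total_cost P c f \<le> total_cost P c g)"

definition is_DIOT :: "'e list set \<Rightarrow> ('e \<Rightarrow> real \<Rightarrow> real) \<Rightarrow> ('e \<Rightarrow> real) \<Rightarrow> bool" where
  "is_DIOT P c \<tau> \<longleftrightarrow> (\<forall>\<mu>\<ge>0. \<forall>f. wardrop P (\<lambda>e x. c e x + \<tau> e) \<mu> f \<longrightarrow> system_optimum P c \<mu> f)"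

text \<open>x^beta with the convention x^0 = 1 (also at x = 0).\<close>
definition rpow :: "real \<Rightarrow> real \<Rightarrow> real" where
  "rpow x \<beta> = (if \<beta> = 0 then 1 else x powr \<beta>)"

definition bpr_cost :: "('e \<Rightarrow> real) \<Rightarrow> ('e \<Rightarrow> real) \<Rightarrow> real \<Rightarrow> 'e \<Rightarrow> real \<Rightarrow> real" where
  "bpr_cost t a \<beta> e x = t e + a e * rpow x \<beta>"

end

theory Submission
  imports Defs "HOL-Analysis.Analysis"
begin

lemma walk_telescope:
  "is_walk src tgt u p v \<Longrightarrow> (\<Sum>e\<leftarrow>p. g (tgt e) - g (src e)) = (g v - (g u :: real))"
  by (induction p arbitrary: u) auto

lemma walk_last:
  "is_walk src tgt u p v \<Longrightarrow> p \<noteq> [] \<Longrightarrow> tgt (last p) = v"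
proof (induction p arbitrary: u)
  case Nil then show ?case by simp
next
  case (Cons e p) then show ?case by (cases p) auto
qed

lemma od_paths_props:
  assumes "p \<in> od_paths E src tgt orig dest"
  shows "set p \<subseteq> E" "distinct p" "is_walk src tgt orig p dest"
  using assms unfolding od_paths_def by (auto simp: distinct_map)

lemma od_paths_finite:
  assumes "finite E"
  shows "finite (od_paths E src tgt orig dest)"
proof -
  have "od_paths E src tgt orig dest \<subseteq> {xs. set xs \<subseteq> E \<and> length xs \<le> card E}"
  proof
    fix p assume p: "p \<in> od_paths E src tgt orig dest"
    then have "set p \<subseteq> E" "distinct p" using od_paths_props by metis+
    then have "length p \<le> card E"
      using assms by (metis card_mono distinct_card)
    with \<open>set p \<subseteq> E\<close> show "p \<in> {xs. set xs \<subseteq> E \<and> length xs \<le> card E}" by simp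
  qed
  then show ?thesis using finite_subset finite_lists_length_le[OF assms] by blast
qed

lemma od_paths_loop:
  assumes "p \<in> od_paths E src tgt orig orig"
  shows "p = []"
proof (rule ccontr)
  assume ne: "p \<noteq> []"
  have w: "is_walk src tgt orig p orig" and d: "distinct (orig # map tgt p)"
    using assms unfolding od_paths_def by auto
  have "tgt (last p) = orig" using walk_last[OF w ne] .
  moreover have "tgt (last p) \<in> set (map tgt p)" using ne by simp
  ultimately show False using d by simp
qed

lemma exch:
  assumes "finite P" "finite E" "\<forall>p\<in>P. set p \<subseteq> E \<and> distinct p"
  shows "(\<Sum>p\<in>P. f p * (\<Sum>e\<leftarrow>p. w e)) = (\<Sum>e\<in>E. w e * load P f e)"
proof -
  have "(\<Sum>p\<in>P. f p * (\<Sum>e\<leftarrow>p. w e)) = (\<Sum>p\<in>P. \<Sum>e\<in>E. if e \<in> set p then f p * w e else 0)"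
  proof (rule sum.cong[OF refl])
    fix p assume "p \<in> P"
    then have sp: "set p \<subseteq> E" "distinct p" using assms(3) by auto
    have "(\<Sum>e\<leftarrow>p. w e) = sum w (set p)" using sp(2) by (simp add: sum_list_distinct_conv_sum_set)
    also have "\<dots> = (\<Sum>e\<in>E. if e \<in> set p then w e else 0)"
      using sp(1) assms(2) by (simp add: sum.If_cases Int_absorb1 inf_commute)
    finally show "f p * (\<Sum>e\<leftarrow>p. w e) = (\<Sum>e\<in>E. if e \<in> set p then f p * w e else 0)"
      by (simp add: sum_distrib_left if_distrib cong: if_cong)
  qed
  also have "\<dots> = (\<Sum>e\<in>E. \<Sum>p\<in>P. if e \<in> set p then f p * w e else 0)"
    by (rule sum.swap)
  also have "\<dots> = (\<Sum>e\<in>E. w e * load P f e)"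
    unfolding load_def by (simp add: sum_distrib_left if_distrib mult.commute cong: if_cong)
  finally show ?thesis .
qed

lemma wardrop_ineq:
  assumes "finite P" "feasible P \<mu> f" "feasible P \<mu> g"
    and W: "\<forall>p\<in>P. f p > 0 \<longrightarrow> (\<forall>q\<in>P. C p \<le> C q)"
  shows "(\<Sum>p\<in>P. f p * C p) \<le> (\<Sum>p\<in>P. g p * (C p :: real))"
proof (cases "\<exists>p0\<in>P. f p0 > 0")
  case True
  then obtain p0 where p0: "p0 \<in> P" "f p0 > 0" by blast
  have "(\<Sum>p\<in>P. f p * C p) = (\<Sum>p\<in>P. f p * C p0)"
  proof (rule sum.cong[OF refl])
    fix p assume p: "p \<in> P"
    show "f p * C p = f p * C p0"
    proof (cases "f p > 0")
      case True
      then have "C p = C p0" using W p p0 by (meson order_antisym)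
      then show ?thesis by simp
    next
      case False
      then have "f p = 0" using assms(2) p unfolding feasible_def by force
      then show ?thesis by simp
    qed
  qed
  also have "\<dots> = \<mu> * C p0" using assms(2) unfolding feasible_def by (simp add: sum_distrib_right[symmetric])
  also have "\<dots> = (\<Sum>p\<in>P. g p * C p0)" using assms(3) unfolding feasible_def by (simp add: sum_distrib_right[symmetric])
  also have "\<dots> \<le> (\<Sum>p\<in>P. g p * C p)"
    apply (rule sum_mono)
    using assms(3) W p0 unfolding feasible_def by (simp add: mult_left_mono)
  finally show ?thesis .
next
  case False
  then have f0: "\<forall>p\<in>P. f p = 0" using assms(2) unfolding feasible_def by force
  then have "\<mu> = 0" using assms(2) unfolding feasible_def by simp
  then have "\<forall>p\<in>P. g p = 0" using assms(1,3) unfolding feasible_def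
    using sum_nonneg_eq_0_iff by blast
  then show ?thesis using f0 by simp
qed


lemma mul_powr_self: "(x::real) \<ge> 0 \<Longrightarrow> x * x powr b = x powr (1 + b)"
  by (simp add: powr_add)

lemma rpow_tangent:
  fixes x y \<beta> :: real
  assumes "x \<ge> 0" "y \<ge> 0" "\<beta> \<ge> 0"
  shows "x * rpow x \<beta> + (1 + \<beta>) * rpow x \<beta> * (y - x) \<le> y * rpow y \<beta>"
proof (cases "\<beta> = 0")
  case True then show ?thesis by (simp add: rpow_def)
next
  case False
  then have b: "\<beta> > 0" using assms by simp
  define q where "q = (1 + \<beta>) / \<beta>"
  have q1: "q > 1" using b by (simp add: q_def)
  have pq: "1 / (1 + \<beta>) + 1 / q = 1" using b by (simp add: q_def field_simps)
  have Y: "y * x powr \<beta> \<le> y powr (1 + \<beta>) / (1 + \<beta>) + (x powr \<beta>) powr q / q"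
    by (rule Youngs_inequality) (use b q1 pq assms in auto)
  have "(x powr \<beta>) powr q = x powr (1 + \<beta>)"
    using b by (simp add: powr_powr q_def)
  with Y have "y * x powr \<beta> \<le> y powr (1 + \<beta>) / (1 + \<beta>) + x powr (1 + \<beta>) * (\<beta> / (1 + \<beta>))"
    by (simp add: q_def)
  then have "(1 + \<beta>) * (y * x powr \<beta>) \<le> (1 + \<beta>) * (y powr (1 + \<beta>) / (1 + \<beta>) + x powr (1 + \<beta>) * (\<beta> / (1 + \<beta>)))"
    using b by (intro mult_left_mono) auto
  also have "\<dots> = y powr (1 + \<beta>) + \<beta> * x powr (1 + \<beta>)"
    using b by (simp add: distrib_left)
  finally have "(1 + \<beta>) * (y * x powr \<beta>) \<le> y powr (1 + \<beta>) + \<beta> * x powr (1 + \<beta>)" .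
  moreover have "x * x powr \<beta> = x powr (1 + \<beta>)" "y * y powr \<beta> = y powr (1 + \<beta>)"
    using assms by (simp_all add: mul_powr_self)
  ultimately show ?thesis using False unfolding rpow_def by (simp add: algebra_simps)
qed


lemma load_nonneg: "\<forall>p\<in>P. f p \<ge> 0 \<Longrightarrow> load P f e \<ge> 0"
  unfolding load_def by (auto intro: sum_nonneg)

lemma total_cost_edges:
  assumes "finite P" "finite E" "\<forall>p\<in>P. set p \<subseteq> E \<and> distinct p"
  shows "total_cost P c f = (\<Sum>e\<in>E. c e (load P f e) * load P f e)"
  unfolding total_cost_def path_cost_def by (rule exch[OF assms])

lemma so_lemma:
  fixes t a :: "'e \<Rightarrow> real"
  assumes fin: "finite P" "finite E" and PE: "\<forall>p\<in>P. set p \<subseteq> E \<and> distinct p"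
    and b: "\<beta> \<ge> 0" and ae: "\<forall>e\<in>E. a e \<ge> 0"
    and ff: "feasible P \<mu> f" and fg: "feasible P \<mu> g"
    and H: "(\<Sum>p\<in>P. f p * (\<Sum>e\<leftarrow>p. t e / (1 + \<beta>) + a e * rpow (load P f e) \<beta>))
          \<le> (\<Sum>p\<in>P. g p * (\<Sum>e\<leftarrow>p. t e / (1 + \<beta>) + a e * rpow (load P f e) \<beta>))"
  shows "total_cost P (bpr_cost t a \<beta>) f \<le> total_cost P (bpr_cost t a \<beta>) g"
proof -
  define x where "x e = load P f e" for e
  define y where "y e = load P g e" for e
  define \<phi> where "\<phi> e = t e / (1 + \<beta>) + a e * rpow (x e) \<beta>" for e
  have x0: "x e \<ge> 0" for e using ff unfolding feasible_def x_def by (simp add: load_nonneg)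
  have y0: "y e \<ge> 0" for e using fg unfolding feasible_def y_def by (simp add: load_nonneg)
  have H2: "(\<Sum>e\<in>E. \<phi> e * x e) \<le> (\<Sum>e\<in>E. \<phi> e * y e)"
    using H unfolding exch[OF fin PE] \<phi>_def x_def y_def .
  have pw: "(1 + \<beta>) * (\<phi> e * y e - \<phi> e * x e) \<le> bpr_cost t a \<beta> e (y e) * y e - bpr_cost t a \<beta> e (x e) * x e"
    if e: "e \<in> E" for e
  proof -
    have T: "a e * (x e * rpow (x e) \<beta> + (1 + \<beta>) * rpow (x e) \<beta> * (y e - x e)) \<le> a e * (y e * rpow (y e) \<beta>)"
      using rpow_tangent[OF x0 y0 b] ae e by (intro mult_left_mono) auto
    have E1: "(1 + \<beta>) * \<phi> e = t e + a e * ((1 + \<beta>) * rpow (x e) \<beta>)"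
      using b unfolding \<phi>_def by (simp add: distrib_left)
    have "(1 + \<beta>) * (\<phi> e * y e - \<phi> e * x e) = ((1 + \<beta>) * \<phi> e) * (y e - x e)"
      by (simp add: algebra_simps)
    also have "\<dots> = (t e + a e * ((1 + \<beta>) * rpow (x e) \<beta>)) * (y e - x e)"
      by (simp only: E1)
    also have "\<dots> = t e * (y e - x e) + (a e * (x e * rpow (x e) \<beta> + (1 + \<beta>) * rpow (x e) \<beta> * (y e - x e)) - a e * (x e * rpow (x e) \<beta>))"
      by (simp add: algebra_simps)
    also have "\<dots> \<le> t e * (y e - x e) + (a e * (y e * rpow (y e) \<beta>) - a e * (x e * rpow (x e) \<beta>))"
      using T by linarith
    also have "\<dots> = bpr_cost t a \<beta> e (y e) * y e - bpr_cost t a \<beta> e (x e) * x e"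
      unfolding bpr_cost_def by (simp add: algebra_simps)
    finally show ?thesis .
  qed
  have "0 \<le> (1 + \<beta>) * ((\<Sum>e\<in>E. \<phi> e * y e) - (\<Sum>e\<in>E. \<phi> e * x e))"
    using H2 b by simp
  also have "\<dots> = (\<Sum>e\<in>E. (1 + \<beta>) * (\<phi> e * y e - \<phi> e * x e))"
    by (simp only: sum_distrib_left[symmetric] sum_subtractf)
  also have "\<dots> \<le> (\<Sum>e\<in>E. bpr_cost t a \<beta> e (y e) * y e - bpr_cost t a \<beta> e (x e) * x e)"
    using pw by (rule sum_mono)
  also have "\<dots> = total_cost P (bpr_cost t a \<beta>) g - total_cost P (bpr_cost t a \<beta>) f"
    unfolding total_cost_edges[OF fin PE] x_def y_def by (simp add: sum_subtractf)
  finally show ?thesis by simp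
qed


theorem corollary10:
  fixes E :: "'e set" and src tgt :: "'e \<Rightarrow> 'v" and orig dest :: 'v
    and t a :: "'e \<Rightarrow> real" and \<beta> :: real
  assumes "finite E"
    and "\<beta> \<ge> 0"
    and "\<forall>e\<in>E. t e \<ge> 0 \<and> a e \<ge> 0"
  shows "\<exists>\<tau> :: 'e \<Rightarrow> real.
           is_DIOT (od_paths E src tgt orig dest) (bpr_cost t a \<beta>) \<tau> \<and>
           (\<forall>\<mu> f. feasible (od_paths E src tgt orig dest) \<mu> f \<longrightarrow>
              (\<Sum>e\<in>E. \<tau> e * load (od_paths E src tgt orig dest) f e) \<ge> 0)"
proof -
  define P where "P = od_paths E src tgt orig dest"
  have finP: "finite P" unfolding P_def using od_paths_finite[OF assms(1)] .
  have PE: "\<forall>p\<in>P. set p \<subseteq> E \<and> distinct p" unfolding P_def using od_paths_props by metis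
  have PW: "\<forall>p\<in>P. is_walk src tgt orig p dest" unfolding P_def using od_paths_props by metis
  have b: "\<beta> \<ge> 0" using assms(2) .
  have ae: "\<forall>e\<in>E. a e \<ge> 0" using assms(3) by blast
  define K where "K = \<beta> / (1 + \<beta>) * (\<Sum>e\<in>E. t e)"
  define \<pi> where "\<pi> v = (if v = dest then K else 0)" for v
  define \<tau> where "\<tau> e = - (\<beta> / (1 + \<beta>)) * t e + (\<pi> (tgt e) - \<pi> (src e))" for e
  have D: "is_DIOT P (bpr_cost t a \<beta>) \<tau>"
    unfolding is_DIOT_def
  proof (intro allI impI)
    fix \<mu> :: real and f
    assume W: "wardrop P (\<lambda>e x. bpr_cost t a \<beta> e x + \<tau> e) \<mu> f"
    define \<phi> where "\<phi> e = t e / (1 + \<beta>) + a e * rpow (load P f e) \<beta>" for e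
    define C where "C = path_cost P (\<lambda>e x. bpr_cost t a \<beta> e x + \<tau> e) f"
    have ff: "feasible P \<mu> f" using W unfolding wardrop_def by blast
    have C_eq: "C p = (\<Sum>e\<leftarrow>p. \<phi> e) + (\<pi> dest - \<pi> orig)" if p: "p \<in> P" for p
    proof -
      have pt: "bpr_cost t a \<beta> e x + \<tau> e = \<phi> e + (\<pi> (tgt e) - \<pi> (src e))"
        if "x = load P f e" for e x
      proof -
        have "t e - \<beta> / (1 + \<beta>) * t e = t e / (1 + \<beta>)"
          using b by (simp add: field_simps)
        then show ?thesis using that unfolding bpr_cost_def \<tau>_def \<phi>_def by simp
      qed
      have "C p = (\<Sum>e\<leftarrow>p. \<phi> e + (\<pi> (tgt e) - \<pi> (src e)))"
        unfolding C_def path_cost_def using pt by simp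
      also have "\<dots> = (\<Sum>e\<leftarrow>p. \<phi> e) + (\<Sum>e\<leftarrow>p. \<pi> (tgt e) - \<pi> (src e))"
        by (rule sum_list_addf)
      also have "\<dots> = (\<Sum>e\<leftarrow>p. \<phi> e) + (\<pi> dest - \<pi> orig)"
        using PW p walk_telescope by fastforce
      finally show ?thesis .
    qed
    show "system_optimum P (bpr_cost t a \<beta>) \<mu> f"
      unfolding system_optimum_def
    proof (intro conjI allI impI)
      show "feasible P \<mu> f" by (rule ff)
      fix g assume fg: "feasible P \<mu> g"
      have "(\<Sum>p\<in>P. f p * C p) \<le> (\<Sum>p\<in>P. g p * C p)"
      proof -
        have Wc: "\<forall>p\<in>P. f p > 0 \<longrightarrow> (\<forall>q\<in>P. C p \<le> C q)"
          using W unfolding wardrop_def C_def by blast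
        show ?thesis by (rule wardrop_ineq[OF finP ff fg Wc])
      qed
      moreover have "(\<Sum>p\<in>P. h p * C p) = (\<Sum>p\<in>P. h p * (\<Sum>e\<leftarrow>p. \<phi> e)) + \<mu> * (\<pi> dest - \<pi> orig)"
        if "feasible P \<mu> h" for h
      proof -
        have "(\<Sum>p\<in>P. h p * C p) = (\<Sum>p\<in>P. h p * (\<Sum>e\<leftarrow>p. \<phi> e) + h p * (\<pi> dest - \<pi> orig))"
          using C_eq by (simp add: distrib_left)
        also have "\<dots> = (\<Sum>p\<in>P. h p * (\<Sum>e\<leftarrow>p. \<phi> e)) + \<mu> * (\<pi> dest - \<pi> orig)"
          using that unfolding feasible_def by (simp add: sum.distrib sum_distrib_right[symmetric])
        finally show ?thesis .
      qed
      ultimately have H: "(\<Sum>p\<in>P. f p * (\<Sum>e\<leftarrow>p. \<phi> e)) \<le> (\<Sum>p\<in>P. g p * (\<Sum>e\<leftarrow>p. \<phi> e))"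
        using ff fg by simp
      show "total_cost P (bpr_cost t a \<beta>) f \<le> total_cost P (bpr_cost t a \<beta>) g"
        by (rule so_lemma[OF finP assms(1) PE b ae ff fg]) (use H in \<open>simp add: \<phi>_def\<close>)
    qed
  qed
  have B: "(\<Sum>e\<in>E. \<tau> e * load P f e) \<ge> 0" if ff: "feasible P \<mu> f" for \<mu> f
  proof -
    have "(\<Sum>e\<in>E. \<tau> e * load P f e) = (\<Sum>p\<in>P. f p * (\<Sum>e\<leftarrow>p. \<tau> e))"
      using exch[OF finP assms(1) PE] by simp
    also have "\<dots> \<ge> 0"
    proof (rule sum_nonneg)
      fix p assume p: "p \<in> P"
      have "(\<Sum>e\<leftarrow>p. \<tau> e) \<ge> 0"
      proof (cases "orig = dest")
        case True
        then have "p = []" using p od_paths_loop unfolding P_def by metis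
        then show ?thesis by simp
      next
        case False
        have "(\<Sum>e\<leftarrow>p. \<tau> e) = (\<Sum>e\<leftarrow>p. - (\<beta> / (1 + \<beta>)) * t e) + (\<Sum>e\<leftarrow>p. \<pi> (tgt e) - \<pi> (src e))"
          unfolding \<tau>_def by (rule sum_list_addf)
        also have "(\<Sum>e\<leftarrow>p. \<pi> (tgt e) - \<pi> (src e)) = K"
        proof -
          have w: "is_walk src tgt orig p dest" using PW p by blast
          show ?thesis unfolding walk_telescope[OF w] using False by (simp add: \<pi>_def)
        qed
        also have "(\<Sum>e\<leftarrow>p. - (\<beta> / (1 + \<beta>)) * t e) = - (\<beta> / (1 + \<beta>)) * sum t (set p)"
          using PE p by (simp add: sum_list_distinct_conv_sum_set sum_distrib_left[symmetric] sum_negf sum_divide_distrib[symmetric])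
        also have "sum t (set p) \<le> sum t E"
          using PE p assms(1,3) by (intro sum_mono2) auto
        then have "- (\<beta> / (1 + \<beta>)) * sum t (set p) + K \<ge> 0"
          unfolding K_def using b by (simp add: mult_left_mono divide_right_mono)
        finally show ?thesis .
      qed
      then show "0 \<le> f p * (\<Sum>e\<leftarrow>p. \<tau> e)" using ff p unfolding feasible_def by simp
    qed
    finally show ?thesis .
  qed
  show ?thesis
    using D B unfolding P_def by blast
qed

end
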